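(* Let $\mathbb{S}\in\mathbb{Z}^{N_X\times N_e}$, $\mathcal{X}=\mathbb{R}^{N_X}_{>0}$, $\Phi$ a primal thermodynamic function on $\mathcal{X}$, $\tilde{x}\in\mathcal{X}$, and $\{\Psi^*_x\}_{x\in\mathcal{X}}$ a family of dissipation functions on $\mathbb{R}^{N_e}$ with conjugates $\Psi_x$. Let $x_t$ be a trajectory in $\mathcal{X}$ of the equilibrium flow $\dot{x}=-\mathbb{S}\,j(x)$ with force $f(x):=\mathbb{S}^T(\nabla\Phi(x)-\nabla\Phi(\tilde{x}))$, flux $j(x):=\nabla\Psi^*_x(f(x))$, and $x(0)=x_0$. Then for every $t\ge0$, $$\mathcal{D}_\Phi[x_0\|\tilde{x}]-\mathcal{D}_\Phi[x_t\|\tilde{x}]=\int_0^t\Big[\Psi^*_{x_{t'}}\big(f(x_{t'})\big)+\Psi_{x_{t'}}\big(j(x_{t'})\big)\Big]dt'=\int_0^t\dot{\Sigma}_{t'}\,dt',$$ where $\dot{\Sigma}_{t'}:=\langle j(x_{t'}),f(x_{t'})\rangle$.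
   Context: A primal thermodynamic function is a strictly convex differentiable $\Phi:\mathcal{X}\to\mathbb{R}$ such that $\{\nabla\Phi(x):x\in\mathcal{X}\}=\mathbb{R}^{N_X}$ and, for every $x_{in}\in\mathcal{X}$ and $x_{bd}\in\mathbb{R}^{N_X}_{\ge0}\setminus\mathcal{X}$, $\lim_{\lambda\to0^+}\frac{d}{d\lambda}\Phi(\lambda x_{in}+(1-\lambda)x_{bd})=-\infty$. The Bregman divergence is $\mathcal{D}_\Phi[x\|x']=\Phi(x)-\Phi(x')-\langle x-x',\nabla\Phi(x')\rangle$. A dissipation function on $\mathbb{R}^{N_e}$ is a strictly convex, continuously differentiable, $1$-coercive, even function $\psi$ with $\psi(0)=0$; $\Psi_x(j):=\max_f[\langle j,f\rangle-\Psi^*_x(f)]$ is the Legendre–Fenchel conjugate of $\Psi^*_x$. *)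

theory Defs
  imports "HOL-Analysis.Analysis"
begin

definition grad :: "('a::euclidean_space \<Rightarrow> real) \<Rightarrow> 'a \<Rightarrow> 'a" where
  "grad f x = (THE D. GDERIV f x :> D)"

definition strictly_convex_on :: "'a::real_vector set \<Rightarrow> ('a \<Rightarrow> real) \<Rightarrow> bool" where
  "strictly_convex_on S f \<longleftrightarrow> convex S \<and>
     (\<forall>x\<in>S. \<forall>y\<in>S. \<forall>u::real. x \<noteq> y \<and> 0 < u \<and> u < 1 \<longrightarrow>
        f (u *\<^sub>R x + (1 - u) *\<^sub>R y) < u * f x + (1 - u) * f y)"

definition pos_orthant :: "(real ^ 'n) set" where
  "pos_orthant = {x. \<forall>i. 0 < x $ i}"

definition nonneg_orthant :: "(real ^ 'n) set" where
  "nonneg_orthant = {x. \<forall>i. 0 \<le> x $ i}"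

definition primal_thermo :: "(real ^ 'n) set \<Rightarrow> (real ^ 'n \<Rightarrow> real) \<Rightarrow> bool" where
  "primal_thermo X \<Phi> \<longleftrightarrow>
     strictly_convex_on X \<Phi> \<and>
     (\<forall>x\<in>X. \<Phi> differentiable (at x)) \<and>
     grad \<Phi> ` X = UNIV \<and>
     (\<forall>x_in\<in>X. \<forall>x_bd\<in>nonneg_orthant - X.
        filterlim (\<lambda>l. deriv (\<lambda>m. \<Phi> (m *\<^sub>R x_in + (1 - m) *\<^sub>R x_bd)) l) at_bot (at_right 0))"

definition bregman :: "(real ^ 'n \<Rightarrow> real) \<Rightarrow> real ^ 'n \<Rightarrow> real ^ 'n \<Rightarrow> real" where
  "bregman \<Phi> x x' = \<Phi> x - \<Phi> x' - (x - x') \<bullet> grad \<Phi> x'"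

definition dissipation :: "(real ^ 'e \<Rightarrow> real) \<Rightarrow> bool" where
  "dissipation \<psi> \<longleftrightarrow>
     strictly_convex_on UNIV \<psi> \<and>
     (\<forall>v. \<psi> differentiable (at v)) \<and> continuous_on UNIV (grad \<psi>) \<and>
     filterlim (\<lambda>v. \<psi> v / norm v) at_top at_infinity \<and>
     (\<forall>v. \<psi> (- v) = \<psi> v) \<and> \<psi> 0 = 0"

text \<open>Legendre--Fenchel conjugate (the sup is a max for dissipation functions).\<close>
definition lf_conj :: "(real ^ 'e \<Rightarrow> real) \<Rightarrow> real ^ 'e \<Rightarrow> real" where
  "lf_conj \<psi> j = (SUP f. j \<bullet> f - \<psi> f)"

end

theory Submission
  imports Defs
begin

lemma grad_works:
  fixes F :: "'a::euclidean_space \<Rightarrow> real"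
  assumes "F differentiable (at x)"
  shows "(F has_derivative (\<lambda>h. h \<bullet> grad F x)) (at x)"
proof -
  obtain D where D: "(F has_derivative D) (at x)" using assms differentiable_def by blast
  have lin: "linear D" using D has_derivative_linear by blast
  define v where "v = adjoint D 1"
  have Dv: "D = (\<lambda>h. h \<bullet> v)"
    using adjoint_works[OF lin, of _ 1] unfolding v_def by (auto simp: fun_eq_iff)
  have G: "GDERIV F x :> v" using D Dv by (simp add: gderiv_def)
  have "grad F x = v"
    unfolding grad_def
  proof (rule the_equality)
    show "GDERIV F x :> v" by (rule G)
  next
    fix w assume "GDERIV F x :> w"
    then have "(\<lambda>h. h \<bullet> w) = (\<lambda>h. h \<bullet> v)"
      using G by (simp add: gderiv_def has_derivative_unique)
    then have "(w - v) \<bullet> w = (w - v) \<bullet> v" by meson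
    then have "(w - v) \<bullet> (w - v) = 0" by (simp add: inner_diff_right)
    then show "w = v" by simp
  qed
  then show ?thesis using G by (simp add: gderiv_def)
qed

lemma sconv_convex:
  assumes "strictly_convex_on UNIV \<psi>"
  shows "convex_on UNIV \<psi>"
  unfolding convex_on_def
proof (intro conjI convex_UNIV allI impI ballI)
  fix x y :: 'a and u v :: real
  assume uv: "0 \<le> u" "0 \<le> v" "u + v = 1"
  show "\<psi> (u *\<^sub>R x + v *\<^sub>R y) \<le> u * \<psi> x + v * \<psi> y"
  proof (cases "x = y \<or> u = 0 \<or> v = 0")
    case True
    then show ?thesis using uv
      by (auto simp: algebra_simps simp flip: scaleR_add_left distrib_right)
  next
    case False
    then have "0 < u" "u < 1" using uv by auto
    moreover have "v = 1 - u" using uv by simp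
    ultimately show ?thesis using False assms unfolding strictly_convex_on_def
      by (metis UNIV_I less_imp_le)
  qed
qed

lemma tangent_ineq:
  fixes \<psi> :: "'a::euclidean_space \<Rightarrow> real"
  assumes "convex_on UNIV \<psi>" "\<psi> differentiable (at c)"
  shows "\<psi> x - \<psi> c \<ge> (x - c) \<bullet> grad \<psi> c"
proof -
  define g where "g u = \<psi> (c + u *\<^sub>R (x - c))" for u :: real
  have cg: "convex_on UNIV g"
    unfolding g_def
  proof (unfold convex_on_def, intro conjI convex_UNIV allI impI ballI)
    fix u1 u2 a b :: real assume ab: "0 \<le> a" "0 \<le> b" "a + b = 1"
    have "c + (a *\<^sub>R u1 + b *\<^sub>R u2) *\<^sub>R (x - c)
        = a *\<^sub>R (c + u1 *\<^sub>R (x - c)) + b *\<^sub>R (c + u2 *\<^sub>R (x - c))"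
      using ab by (simp add: algebra_simps flip: scaleR_add_left)
    then show "\<psi> (c + (a *\<^sub>R u1 + b *\<^sub>R u2) *\<^sub>R (x - c))
        \<le> a * \<psi> (c + u1 *\<^sub>R (x - c)) + b * \<psi> (c + u2 *\<^sub>R (x - c))"
      using assms(1) ab unfolding convex_on_def by simp
  qed
  have "((\<lambda>u. c + u *\<^sub>R (x - c)) has_derivative (\<lambda>u. u *\<^sub>R (x - c))) (at 0)"
    by (auto intro!: derivative_eq_intros)
  moreover have "(\<psi> has_derivative (\<lambda>h. h \<bullet> grad \<psi> c)) (at (c + 0 *\<^sub>R (x - c)))"
    using grad_works[OF assms(2)] by simp
  ultimately have "((\<psi> \<circ> (\<lambda>u. c + u *\<^sub>R (x - c))) has_derivative ((\<lambda>h. h \<bullet> grad \<psi> c) \<circ> (\<lambda>u. u *\<^sub>R (x - c)))) (at 0)"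
    by (rule diff_chain_at)
  then have "(g has_derivative (\<lambda>u. (u *\<^sub>R (x - c)) \<bullet> grad \<psi> c)) (at 0)"
    unfolding g_def o_def by simp
  then have "(g has_field_derivative ((x - c) \<bullet> grad \<psi> c)) (at 0 within UNIV)"
    by (simp add: has_field_derivative_def mult.commute[of _ "(x - c) \<bullet> grad \<psi> c"])
  from convex_on_imp_above_tangent[OF cg _ _ _ this, of 1]
  have "g 1 - g 0 \<ge> (x - c) \<bullet> grad \<psi> c" by simp
  then show ?thesis unfolding g_def by simp
qed

lemma fenchel_eq:
  fixes \<psi> :: "real ^ 'e \<Rightarrow> real"
  assumes "dissipation \<psi>"
  shows "\<psi> v + lf_conj \<psi> (grad \<psi> v) = grad \<psi> v \<bullet> v"
proof -
  have cv: "convex_on UNIV \<psi>" using assms sconv_convex unfolding dissipation_def by blast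
  have dif: "\<And>w. \<psi> differentiable (at w)" using assms unfolding dissipation_def by blast
  have le: "grad \<psi> v \<bullet> w - \<psi> w \<le> grad \<psi> v \<bullet> v - \<psi> v" for w
    using tangent_ineq[OF cv dif, of w v] by (simp add: inner_diff_left inner_commute[of w] inner_commute[of v])
  have "lf_conj \<psi> (grad \<psi> v) = grad \<psi> v \<bullet> v - \<psi> v"
    unfolding lf_conj_def
  proof (rule antisym)
    show "(SUP w. grad \<psi> v \<bullet> w - \<psi> w) \<le> grad \<psi> v \<bullet> v - \<psi> v"
      by (rule cSUP_least) (auto intro: le)
    have "bdd_above (range (\<lambda>w. grad \<psi> v \<bullet> w - \<psi> w))"
      by (rule bdd_aboveI2[OF le])
    then show "grad \<psi> v \<bullet> v - \<psi> v \<le> (SUP w. grad \<psi> v \<bullet> w - \<psi> w)"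
      by (rule cSUP_upper2[where x = v]) auto
  qed
  then show ?thesis by simp
qed

theorem mainTheorem6:
  fixes S :: "real ^ 'e ^ 'x"
    and \<Phi> :: "real ^ 'x \<Rightarrow> real"
    and xt :: "real ^ 'x"
    and PsiS :: "real ^ 'x \<Rightarrow> real ^ 'e \<Rightarrow> real"
    and xs :: "real \<Rightarrow> real ^ 'x"
    and x0 :: "real ^ 'x"
    and f :: "real ^ 'x \<Rightarrow> real ^ 'e"
    and j :: "real ^ 'x \<Rightarrow> real ^ 'e"
  assumes S_int: "\<forall>i k. S $ i $ k \<in> \<int>"
    and Phi: "primal_thermo pos_orthant \<Phi>"
    and xt_in: "xt \<in> pos_orthant"
    and diss: "\<forall>x\<in>pos_orthant. dissipation (PsiS x)"
    and f_def: "\<forall>x. f x = transpose S *v (grad \<Phi> x - grad \<Phi> xt)"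
    and j_def: "\<forall>x. j x = grad (PsiS x) (f x)"
    and traj_in: "\<forall>t\<ge>0. xs t \<in> pos_orthant"
    and traj_ode: "\<forall>t\<ge>0. (xs has_vector_derivative (- (S *v j (xs t)))) (at t within {0..})"
    and init: "xs 0 = x0"
    and t_nonneg: "t \<ge> 0"
  shows "((\<lambda>s. PsiS (xs s) (f (xs s)) + lf_conj (PsiS (xs s)) (j (xs s))) has_integral
            (bregman \<Phi> x0 xt - bregman \<Phi> (xs t) xt)) {0..t}
       \<and> ((\<lambda>s. j (xs s) \<bullet> f (xs s)) has_integral
            (bregman \<Phi> x0 xt - bregman \<Phi> (xs t) xt)) {0..t}"
proof -
  define B where "B s = - bregman \<Phi> (xs s) xt" for s
  have dB: "(B has_vector_derivative (j (xs s) \<bullet> f (xs s))) (at s within {0..t})"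
    if s: "s \<in> {0..t}" for s
  proof -
    let ?x = "xs s" and ?v = "- (S *v j (xs s))"
    have xin: "?x \<in> pos_orthant" using traj_in s by auto
    have dP: "(\<Phi> has_derivative (\<lambda>h. h \<bullet> grad \<Phi> ?x)) (at ?x)"
      using grad_works Phi xin unfolding primal_thermo_def by blast
    have dx: "(xs has_derivative (\<lambda>r. r *\<^sub>R ?v)) (at s within {0..t})"
      using traj_ode s has_vector_derivative_within_subset[of xs ?v s "{0..}" "{0..t}"]
      by (auto simp: has_vector_derivative_def)
    have c1: "((\<lambda>s. \<Phi> (xs s)) has_derivative (\<lambda>r. (r *\<^sub>R ?v) \<bullet> grad \<Phi> ?x)) (at s within {0..t})"
      using diff_chain_within[OF dx has_derivative_at_withinI[OF dP]] by (simp add: o_def)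
    have "(B has_derivative (\<lambda>r. - ((r *\<^sub>R ?v) \<bullet> grad \<Phi> ?x - 0 - (r *\<^sub>R ?v - 0) \<bullet> grad \<Phi> xt))) (at s within {0..t})"
      unfolding B_def bregman_def
      by (intro derivative_intros c1 dx has_derivative_inner_left) 
    moreover have "- ((r *\<^sub>R ?v) \<bullet> grad \<Phi> ?x - 0 - (r *\<^sub>R ?v - 0) \<bullet> grad \<Phi> xt)
        = r *\<^sub>R (j (xs s) \<bullet> f (xs s))" for r
    proof -
      have "- ((r *\<^sub>R ?v) \<bullet> grad \<Phi> ?x - 0 - (r *\<^sub>R ?v - 0) \<bullet> grad \<Phi> xt)
          = r * ((S *v j ?x) \<bullet> (grad \<Phi> ?x - grad \<Phi> xt))"
        by (simp add: inner_diff_right algebra_simps)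
      also have "(S *v j ?x) \<bullet> (grad \<Phi> ?x - grad \<Phi> xt) = j ?x \<bullet> f ?x"
        using f_def dot_lmul_matrix[of "grad \<Phi> ?x - grad \<Phi> xt" S "j ?x"]
        by (simp add: inner_commute)
      finally show ?thesis by simp
    qed
    ultimately show ?thesis unfolding has_vector_derivative_def by simp
  qed
  have I2: "((\<lambda>s. j (xs s) \<bullet> f (xs s)) has_integral
            (bregman \<Phi> x0 xt - bregman \<Phi> (xs t) xt)) {0..t}"
    using fundamental_theorem_of_calculus[OF t_nonneg dB] init unfolding B_def by simp
  have eq: "PsiS (xs s) (f (xs s)) + lf_conj (PsiS (xs s)) (j (xs s)) = j (xs s) \<bullet> f (xs s)"
    if "s \<in> {0..t}" for s
    using fenchel_eq[of "PsiS (xs s)" "f (xs s)"] diss traj_in that j_def by auto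
  have I1: "((\<lambda>s. PsiS (xs s) (f (xs s)) + lf_conj (PsiS (xs s)) (j (xs s))) has_integral
            (bregman \<Phi> x0 xt - bregman \<Phi> (xs t) xt)) {0..t}"
    by (rule has_integral_eq[OF _ I2]) (rule eq[symmetric])
  show ?thesis using I1 I2 by (rule conjI)
qed

end
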